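(* For every linear operator $T$ in $H$, the essential numerical range $W_e(T)$ is closed and convex, and $\operatorname{conv}\sigma_e(T)\subset W_e(T)$.
   Context: $H$ is a separable infinite-dimensional complex Hilbert space; operators need not be closed, closable or densely defined. $W_e(T)=\{\lambda\in\mathbb C:\exists x_n\in\operatorname{dom}(T),\|x_n\|=1,x_n\stackrel{w}{\to}0,\langle Tx_n,x_n\rangle\to\lambda\}$ and $\sigma_e(T)=\{\lambda:\exists x_n\in\operatorname{dom}(T),\|x_n\|=1,x_n\stackrel{w}{\to}0,\|(T-\lambda)x_n\|\to0\}$. *)

theory Defs
  imports "HOL-Analysis.Analysis"
begin

text \<open>The separable infinite-dimensional complex Hilbert space H is modelled
  concretely as l2 = square-summable complex sequences (every such H is unitarily
  isomorphic to l2).  An operator in H is a pair (D, T): a domain D (a linear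
  subspace of l2, not necessarily closed or dense) and a map T defined on D.\<close>

definition l2 :: "(nat \<Rightarrow> complex) set" where
  "l2 = {x. summable (\<lambda>i. (cmod (x i))^2)}"

definition l2_inner :: "(nat \<Rightarrow> complex) \<Rightarrow> (nat \<Rightarrow> complex) \<Rightarrow> complex" where
  "l2_inner x y = (\<Sum>i. x i * cnj (y i))"

definition l2_norm :: "(nat \<Rightarrow> complex) \<Rightarrow> real" where
  "l2_norm x = sqrt (\<Sum>i. (cmod (x i))^2)"

definition weakly_to_zero :: "(nat \<Rightarrow> (nat \<Rightarrow> complex)) \<Rightarrow> bool" where
  "weakly_to_zero X \<longleftrightarrow> (\<forall>y\<in>l2. (\<lambda>n. l2_inner (X n) y) \<longlonglongrightarrow> 0)"

definition linear_operator :: "(nat \<Rightarrow> complex) set \<Rightarrow> ((nat \<Rightarrow> complex) \<Rightarrow> (nat \<Rightarrow> complex)) \<Rightarrow> bool" where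
  "linear_operator D T \<longleftrightarrow>
     D \<subseteq> l2 \<and> (\<lambda>i. 0) \<in> D \<and>
     (\<forall>x\<in>D. \<forall>y\<in>D. (\<lambda>i. x i + y i) \<in> D) \<and>
     (\<forall>c. \<forall>x\<in>D. (\<lambda>i. c * x i) \<in> D) \<and>
     (\<forall>x\<in>D. T x \<in> l2) \<and>
     (\<forall>x\<in>D. \<forall>y\<in>D. T (\<lambda>i. x i + y i) = (\<lambda>i. T x i + T y i)) \<and>
     (\<forall>c. \<forall>x\<in>D. T (\<lambda>i. c * x i) = (\<lambda>i. c * T x i))"

definition ess_num_range :: "(nat \<Rightarrow> complex) set \<Rightarrow> ((nat \<Rightarrow> complex) \<Rightarrow> (nat \<Rightarrow> complex)) \<Rightarrow> complex set" where
  "ess_num_range D T = {z. \<exists>X. (\<forall>n. X n \<in> D \<and> l2_norm (X n) = 1) \<and> weakly_to_zero X \<and>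
       (\<lambda>n. l2_inner (T (X n)) (X n)) \<longlonglongrightarrow> z}"

definition ess_spectrum :: "(nat \<Rightarrow> complex) set \<Rightarrow> ((nat \<Rightarrow> complex) \<Rightarrow> (nat \<Rightarrow> complex)) \<Rightarrow> complex set" where
  "ess_spectrum D T = {z. \<exists>X. (\<forall>n. X n \<in> D \<and> l2_norm (X n) = 1) \<and> weakly_to_zero X \<and>
       (\<lambda>n. l2_norm (\<lambda>i. T (X n) i - z * X n i)) \<longlonglongrightarrow> 0}"

end

theory Submission
  imports Defs "HOL-Analysis.Analysis"
begin

lemma l2_iff: "x \<in> l2 \<longleftrightarrow> summable (\<lambda>i. (cmod (x i))^2)"
  by (simp add: l2_def)

lemma prod_bound_real: "(a::real) * b \<le> (a ^ 2 + b ^ 2) / 2"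
proof -
  have "0 \<le> (a - b)^2" by simp
  thus ?thesis by (simp add: power2_eq_square algebra_simps)
qed

lemma prod_bound: "cmod a * cmod b \<le> (cmod a ^ 2 + cmod b ^ 2) / 2"
proof -
  have "0 \<le> (cmod a - cmod b)^2" by simp
  thus ?thesis by (simp add: power2_eq_square algebra_simps)
qed

lemma l2_summable_norm_prod:
  assumes "x \<in> l2" "y \<in> l2"
  shows "summable (\<lambda>i. cmod (x i) * cmod (y i))"
proof (rule summable_comparison_test[where g = "\<lambda>i. (cmod (x i) ^ 2 + cmod (y i) ^ 2) / 2"])
  have "norm (cmod (x n) * cmod (y n)) \<le> (cmod (x n) ^ 2 + cmod (y n) ^ 2) / 2" for n
    using prod_bound[of "x n" "y n"] by (simp only: real_norm_def abs_mult abs_norm_cancel)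
  thus "\<exists>N. \<forall>n\<ge>N. norm (cmod (x n) * cmod (y n)) \<le> (cmod (x n) ^ 2 + cmod (y n) ^ 2) / 2"
    by blast
  show "summable (\<lambda>n. (cmod (x n) ^ 2 + cmod (y n) ^ 2) / 2)"
    using assms by (intro summable_divide summable_add) (auto simp: l2_iff)
qed

lemma l2_summable_prod:
  assumes "x \<in> l2" "y \<in> l2"
  shows "summable (\<lambda>i. x i * cnj (y i))"
proof (rule summable_norm_cancel)
  have "(\<lambda>i. norm (x i * cnj (y i))) = (\<lambda>i. cmod (x i) * cmod (y i))"
    by (simp add: norm_mult)
  thus "summable (\<lambda>i. norm (x i * cnj (y i)))" using l2_summable_norm_prod[OF assms] by simp
qed

lemma l2_add: assumes "x \<in> l2" "y \<in> l2" shows "(\<lambda>i. x i + y i) \<in> l2"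
proof -
  have sx: "summable (\<lambda>i. cmod (x i) ^ 2)" and sy: "summable (\<lambda>i. cmod (y i) ^ 2)"
    using assms by (auto simp only: l2_iff)
  have sg: "summable (\<lambda>i. 2 * (cmod (x i) ^ 2 + cmod (y i) ^ 2))"
    by (rule summable_mult[OF summable_add[OF sx sy]])
  have b: "norm ((cmod (x i + y i))^2) \<le> 2 * (cmod (x i) ^ 2 + cmod (y i) ^ 2)" for i
  proof -
    have "cmod (x i + y i) \<le> cmod (x i) + cmod (y i)" by (rule norm_triangle_ineq)
    hence "(cmod (x i + y i))^2 \<le> (cmod (x i) + cmod (y i))^2" by (rule power_mono) simp
    also have "\<dots> \<le> 2 * (cmod (x i) ^ 2 + cmod (y i) ^ 2)"
      using prod_bound[of "x i" "y i"] by (simp add: power2_eq_square algebra_simps)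
    finally show ?thesis by simp
  qed
  have "summable (\<lambda>i. (cmod (x i + y i))^2)"
    by (rule summable_comparison_test[OF _ sg]) (use b in blast)
  thus ?thesis by (simp only: l2_iff)
qed

lemma l2_scale: assumes "x \<in> l2" shows "(\<lambda>i. c * x i) \<in> l2"
proof -
  have "(\<lambda>i. (cmod (c * x i))^2) = (\<lambda>i. (cmod c)^2 * (cmod (x i))^2)"
    by (simp add: norm_mult power_mult_distrib)
  thus ?thesis using summable_mult[OF assms[unfolded l2_iff], of "(cmod c)^2"] by (simp add: l2_iff)
qed

lemma inner_add_left: assumes "x \<in> l2" "y \<in> l2" "w \<in> l2"
  shows "l2_inner (\<lambda>i. x i + y i) w = l2_inner x w + l2_inner y w"
  unfolding l2_inner_def using l2_summable_prod[OF assms(1,3)] l2_summable_prod[OF assms(2,3)]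
  by (simp add: distrib_right suminf_add)

lemma inner_scale_left: assumes "x \<in> l2" "w \<in> l2"
  shows "l2_inner (\<lambda>i. c * x i) w = c * l2_inner x w"
  unfolding l2_inner_def using l2_summable_prod[OF assms]
  by (simp add: suminf_mult mult.assoc)

lemma inner_cnj: assumes "x \<in> l2" "y \<in> l2"
  shows "l2_inner y x = cnj (l2_inner x y)"
proof -
  have "(\<lambda>i. x i * cnj (y i)) sums l2_inner x y"
    unfolding l2_inner_def using l2_summable_prod[OF assms] by (simp add: summable_sums)
  hence "(\<lambda>i. cnj (x i * cnj (y i))) sums cnj (l2_inner x y)" by (simp only: sums_cnj)
  hence "(\<lambda>i. y i * cnj (x i)) sums cnj (l2_inner x y)" by (simp add: mult.commute)
  thus ?thesis unfolding l2_inner_def by (simp add: sums_unique[symmetric])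
qed

lemma inner_add_right: assumes "x \<in> l2" "y \<in> l2" "w \<in> l2"
  shows "l2_inner w (\<lambda>i. x i + y i) = l2_inner w x + l2_inner w y"
  using inner_cnj[OF l2_add[OF assms(1,2)] assms(3)] inner_cnj[OF assms(1,3)] inner_cnj[OF assms(2,3)]
    inner_add_left[OF assms] by simp

lemma inner_scale_right: assumes "x \<in> l2" "w \<in> l2"
  shows "l2_inner w (\<lambda>i. c * x i) = cnj c * l2_inner w x"
  using inner_cnj[OF l2_scale[OF assms(1)] assms(2), of c] inner_cnj[OF assms] inner_scale_left[OF assms, of c]
  by simp

lemma norm_sq_sum: assumes "x \<in> l2" shows "(l2_norm x)^2 = (\<Sum>i. (cmod (x i))^2)"
  unfolding l2_norm_def using assms by (simp add: l2_iff suminf_nonneg)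

lemma inner_self: assumes "x \<in> l2" shows "l2_inner x x = complex_of_real ((l2_norm x)^2)"
proof -
  have "(\<lambda>i. x i * cnj (x i)) = (\<lambda>i. complex_of_real ((cmod (x i))^2))"
    by (metis complex_norm_square of_real_power)
  hence "l2_inner x x = (\<Sum>i. complex_of_real ((cmod (x i))^2))" unfolding l2_inner_def by simp
  also have "\<dots> = complex_of_real (\<Sum>i. (cmod (x i))^2)"
    by (rule suminf_of_real[OF assms[unfolded l2_iff], symmetric])
  finally show ?thesis unfolding norm_sq_sum[OF assms] .
qed

lemma l2_norm_nonneg: "x \<in> l2 \<Longrightarrow> 0 \<le> l2_norm x"
  unfolding l2_norm_def by (simp add: l2_iff suminf_nonneg)

lemma cauchy_schwarz: assumes "x \<in> l2" "y \<in> l2"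
  shows "cmod (l2_inner x y) \<le> l2_norm x * l2_norm y"
proof -
  define X where "X = (\<Sum>i. (cmod (x i))^2)"
  define Y where "Y = (\<Sum>i. (cmod (y i))^2)"
  have sx: "summable (\<lambda>i. (cmod (x i))^2)" and sy: "summable (\<lambda>i. (cmod (y i))^2)"
    using assms by (auto simp: l2_iff)
  have X0: "0 \<le> X" "0 \<le> Y" unfolding X_def Y_def using sx sy by (auto intro: suminf_nonneg)
  have nx: "l2_norm x = sqrt X" and ny: "l2_norm y = sqrt Y" unfolding X_def Y_def l2_norm_def by auto
  have main: "cmod (l2_inner x y) \<le> (a * X + Y / a) / 2" if a: "a > 0" for a
  proof -
    have "cmod (l2_inner x y) \<le> (\<Sum>i. (a * (cmod (x i))^2 + (cmod (y i))^2 / a) / 2)"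
      unfolding l2_inner_def
    proof (rule norm_suminf_le)
      fix i
      have "cmod (x i * cnj (y i)) = (sqrt a * cmod (x i)) * (cmod (y i) / sqrt a)"
        using a by (simp add: norm_mult)
      also have "\<dots> \<le> ((sqrt a * cmod (x i))^2 + (cmod (y i) / sqrt a)^2) / 2"
        by (rule prod_bound_real)
      also have "\<dots> = (a * (cmod (x i))^2 + (cmod (y i))^2 / a) / 2"
        using a by (simp add: power_mult_distrib power_divide)
      finally show "cmod (x i * cnj (y i)) \<le> (a * (cmod (x i))^2 + (cmod (y i))^2 / a) / 2" .
      show "summable (\<lambda>i. (a * (cmod (x i))^2 + (cmod (y i))^2 / a) / 2)"
        using sx sy by (intro summable_divide summable_add summable_mult) auto
    qed
    also have "\<dots> = (a * X + Y / a) / 2"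
    proof -
      have s1: "summable (\<lambda>i. a * (cmod (x i))^2)" using sx by (rule summable_mult)
      have s2: "summable (\<lambda>i. (cmod (y i))^2 / a)" using sy by (rule summable_divide)
      have "(\<Sum>i. (a * (cmod (x i))^2 + (cmod (y i))^2 / a) / 2) = (\<Sum>i. a * (cmod (x i))^2 + (cmod (y i))^2 / a) / 2"
        by (rule suminf_divide[OF summable_add[OF s1 s2]])
      also have "(\<Sum>i. a * (cmod (x i))^2 + (cmod (y i))^2 / a) = (\<Sum>i. a * (cmod (x i))^2) + (\<Sum>i. (cmod (y i))^2 / a)"
        by (rule suminf_add[OF s1 s2, symmetric])
      also have "(\<Sum>i. a * (cmod (x i))^2) = a * X" unfolding X_def by (rule suminf_mult[OF sx])
      also have "(\<Sum>i. (cmod (y i))^2 / a) = Y / a" unfolding Y_def by (rule suminf_divide[OF sy])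
      finally show ?thesis .
    qed
    finally show ?thesis .
  qed
  show ?thesis
  proof (cases "X = 0 \<or> Y = 0")
    case True
    hence "(\<forall>i. x i = 0) \<or> (\<forall>i. y i = 0)"
      using suminf_eq_zero_iff[OF sx] suminf_eq_zero_iff[OF sy] unfolding X_def Y_def by auto
    hence "l2_inner x y = 0" unfolding l2_inner_def by auto
    thus ?thesis using l2_norm_nonneg[OF assms(1)] l2_norm_nonneg[OF assms(2)] by simp
  next
    case False
    hence p: "X > 0" "Y > 0" using X0 by auto
    have "cmod (l2_inner x y) \<le> (sqrt Y / sqrt X * X + Y / (sqrt Y / sqrt X)) / 2"
      using main[of "sqrt Y / sqrt X"] p by simp
    also have "\<dots> = sqrt X * sqrt Y"
    proof -
      have "X = sqrt X * sqrt X" using p by simp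
      hence "sqrt Y / sqrt X * X = sqrt X * sqrt Y" using p
        by (metis mult.commute nonzero_mult_div_cancel_left order_less_irrefl real_sqrt_gt_0_iff times_divide_eq_left)
      moreover have "Y = sqrt Y * sqrt Y" using p by simp
      hence "Y / (sqrt Y / sqrt X) = sqrt X * sqrt Y" using p by (simp add: field_simps)
      ultimately show ?thesis by simp
    qed
    finally show ?thesis using nx ny by simp
  qed
qed

definition ev :: "nat \<Rightarrow> nat \<Rightarrow> complex" where "ev j = (\<lambda>i. if i = j then 1 else 0)"

lemma ev_l2: "ev j \<in> l2"
proof -
  have "(\<lambda>i. (cmod (ev j i))^2) = (\<lambda>i. if i = j then 1 else 0)" by (auto simp: ev_def)
  thus ?thesis unfolding l2_iff using summable_single[of j "\<lambda>_. 1::real"] by simp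
qed

lemma inner_ev: "l2_inner x (ev j) = x j"
proof -
  have "(\<lambda>i. x i * cnj (ev j i)) = (\<lambda>i. if i = j then x i else 0)" by (auto simp: ev_def)
  thus ?thesis unfolding l2_inner_def using sums_single[of j x] by (simp add: sums_iff)
qed

lemma weak_coord: "weakly_to_zero X \<Longrightarrow> (\<lambda>n. X n j) \<longlonglongrightarrow> 0"
  unfolding weakly_to_zero_def using ev_l2[of j] inner_ev[of "X _" j] by auto

lemma prod_bound_a: assumes "(a::real) > 0" shows "u * v \<le> (a * u^2 + v^2 / a) / 2"
proof -
  have "u * v = (sqrt a * u) * (v / sqrt a)" using assms by simp
  also have "\<dots> \<le> ((sqrt a * u)^2 + (v / sqrt a)^2) / 2" by (rule prod_bound_real)
  also have "\<dots> = (a * u^2 + v^2 / a) / 2" using assms by (simp add: power_mult_distrib power_divide)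
  finally show ?thesis .
qed

lemma coord_weak:
  assumes X: "\<And>n. X n \<in> l2" "\<And>n. l2_norm (X n) = 1" and c: "\<And>j. (\<lambda>n. X n j) \<longlonglongrightarrow> 0"
  shows "weakly_to_zero X"
  unfolding weakly_to_zero_def
proof (intro ballI)
  fix y assume y: "y \<in> l2"
  have sy: "summable (\<lambda>i. (cmod (y i))^2)" using y by (simp add: l2_iff)
  show "(\<lambda>n. l2_inner (X n) y) \<longlonglongrightarrow> 0"
  proof (rule LIMSEQ_I)
    fix e :: real assume e: "0 < e"
    define \<epsilon> where "\<epsilon> = e / 3"
    have ep: "\<epsilon> > 0" using e by (simp add: \<epsilon>_def)
    obtain N where N: "norm (\<Sum>i. (cmod (y (i + N)))^2) < \<epsilon>^2"
      using suminf_exist_split[of "\<epsilon>^2" "\<lambda>i. (cmod (y i))^2", OF _ sy] ep by auto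
    define Tl where "Tl = (\<lambda>i. if i < N then 0 else (cmod (y i))^2)"
    have sT: "summable Tl"
      unfolding Tl_def by (rule summable_comparison_test[OF _ sy]) auto
    have "suminf Tl = (\<Sum>i. Tl (i + N)) + sum Tl {..<N}" by (rule suminf_split_initial_segment[OF sT])
    also have "sum Tl {..<N} = 0" unfolding Tl_def by simp
    also have "(\<lambda>i. Tl (i + N)) = (\<lambda>i. (cmod (y (i + N)))^2)" unfolding Tl_def by auto
    finally have Tlb: "suminf Tl < \<epsilon>^2" using N by simp
    define F where "F = (\<lambda>n. \<Sum>i<N. cmod (X n i) * cmod (y i))"
    have "F \<longlonglongrightarrow> (\<Sum>i<N. 0 * cmod (y i))"
      unfolding F_def by (intro tendsto_sum tendsto_mult tendsto_const tendsto_norm_zero c)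
    hence "F \<longlonglongrightarrow> 0" by simp
    hence "eventually (\<lambda>n. F n < \<epsilon>) sequentially" using ep by (simp add: order_tendstoD(2))
    then obtain M where M: "\<And>n. n \<ge> M \<Longrightarrow> F n < \<epsilon>" by (auto simp: eventually_sequentially)
    show "\<exists>M. \<forall>n\<ge>M. norm (l2_inner (X n) y - 0) < e"
    proof (intro exI allI impI)
      fix n assume n: "n \<ge> M"
      define x where "x = X n"
      have xl: "x \<in> l2" and xn: "l2_norm x = 1" using X by (auto simp: x_def)
      have sx: "summable (\<lambda>i. (cmod (x i))^2)" using xl by (simp add: l2_iff)
      have sumx: "(\<Sum>i. (cmod (x i))^2) = 1" using norm_sq_sum[OF xl] xn by simp
      define G where "G = (\<lambda>i. (if i < N then cmod (x i) * cmod (y i) else 0) + \<epsilon> * (cmod (x i))^2 / 2 + Tl i / (2 * \<epsilon>))"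
      have sG1: "summable (\<lambda>i. if i < N then cmod (x i) * cmod (y i) else 0)"
        using summable_If_finite[of "\<lambda>i. i < N"] by simp
      have sG2: "summable (\<lambda>i. \<epsilon> * (cmod (x i))^2 / 2)" using sx by (intro summable_divide summable_mult)
      have sG3: "summable (\<lambda>i. Tl i / (2 * \<epsilon>))" using sT by (rule summable_divide)
      have sG: "summable G" unfolding G_def by (intro summable_add sG1 sG2 sG3)
      have "norm (l2_inner x y) \<le> suminf G"
        unfolding l2_inner_def
      proof (rule norm_suminf_le[OF _ sG])
        fix i
        have Tnn: "0 \<le> Tl i" unfolding Tl_def by simp
        show "norm (x i * cnj (y i)) \<le> G i"
        proof (cases "i < N")
          case True thus ?thesis using Tnn ep by (simp add: G_def norm_mult)
        next
          case False
          hence "norm (x i * cnj (y i)) \<le> (\<epsilon> * (cmod (x i))^2 + (cmod (y i))^2 / \<epsilon>) / 2"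
            using prod_bound_a[OF ep, of "cmod (x i)" "cmod (y i)"] by (simp add: norm_mult)
          thus ?thesis using False by (simp add: G_def Tl_def field_simps)
        qed
      qed
      also have "suminf G = (\<Sum>i. if i < N then cmod (x i) * cmod (y i) else 0) + (\<Sum>i. \<epsilon> * (cmod (x i))^2 / 2) + (\<Sum>i. Tl i / (2 * \<epsilon>))"
        unfolding G_def by (simp only: suminf_add[OF sG1 sG2] suminf_add[OF summable_add[OF sG1 sG2] sG3])
      also have "(\<Sum>i. if i < N then cmod (x i) * cmod (y i) else 0) = F n"
        unfolding F_def x_def by (subst suminf_finite[of "{..<N}"]) auto
      also have "(\<Sum>i. \<epsilon> * (cmod (x i))^2 / 2) = \<epsilon> / 2"
        using suminf_divide[OF summable_mult[OF sx, of \<epsilon>], of 2] suminf_mult[OF sx, of \<epsilon>] sumx by simp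
      also have "(\<Sum>i. Tl i / (2 * \<epsilon>)) = suminf Tl / (2 * \<epsilon>)" by (rule suminf_divide[OF sT])
      also have "suminf Tl / (2 * \<epsilon>) \<le> \<epsilon> / 2"
        using Tlb ep by (simp add: field_simps power2_eq_square)
      finally have "norm (l2_inner x y) \<le> F n + \<epsilon>" by simp
      thus "norm (l2_inner (X n) y - 0) < e" using M[OF n] e unfolding x_def \<epsilon>_def by simp
    qed
  qed
qed

lemma exists_phi: "\<exists>\<phi>. Im (cnj (cis \<phi>) * C + cis \<phi> * B) = 0"
proof -
  define p where "p = (\<lambda>\<phi>. Im (cnj (cis \<phi>) * C + cis \<phi> * B))"
  have pi: "p pi = - p 0" unfolding p_def by simp
  have cont: "\<forall>x. 0 \<le> x \<and> x \<le> pi \<longrightarrow> isCont p x" unfolding p_def by (auto intro!: continuous_intros)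
  show ?thesis
  proof (cases "p 0 \<le> 0")
    case True
    then obtain x where "p x = 0" using IVT[of p 0 0 pi] cont pi by auto
    thus ?thesis unfolding p_def by auto
  next
    case False
    then obtain x where "p x = 0" using IVT2[of p pi 0 0] cont pi by auto
    thus ?thesis unfolding p_def by auto
  qed
qed

lemma key_alg:
  fixes l m B C A :: complex and t :: real
  assumes A: "cmod A \<le> 1/4" and t: "0 \<le> t" "t \<le> 1"
  shows "\<exists>a b. (cmod a)^2 + (cmod b)^2 = 1 \<and>
     of_real ((cmod a)^2) * l + of_real ((cmod b)^2) * m + a * cnj b * C + b * cnj a * B
       = (l + of_real t * (m - l)) * (1 + a * cnj b * cnj A + b * cnj a * A)"
proof (cases "l = m")
  case True
  show ?thesis by (rule exI[of _ 1], rule exI[of _ 0]) (simp add: True)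
next
  case False
  define d where "d = m - l"
  have d: "d \<noteq> 0" using False by (simp add: d_def)
  obtain \<phi> where phi: "Im (cnj (cis \<phi>) * ((C - l * cnj A) / d) + cis \<phi> * ((B - l * A) / d)) = 0"
    using exists_phi by blast
  define E where "E = cis \<phi>"
  define H where "H = Re (cnj E * ((C - l * cnj A) / d) + E * ((B - l * A) / d))"
  define K where "K = 2 * Re (E * A)"
  have hH: "cnj E * ((C - l * cnj A) / d) + E * ((B - l * A) / d) = of_real H"
    using phi unfolding H_def E_def by (simp add: complex_eq_iff)
  have kK: "cnj E * cnj A + E * A = of_real K"
    unfolding K_def using complex_add_cnj[of "E * A"] by (simp add: add.commute)
  have EE: "E * cnj E = 1" unfolding E_def by (simp add: cis_cnj cis_mult)
  have comb: "cnj E * C + E * B = d * of_real H + l * of_real K"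
  proof -
    have "d * of_real H = cnj E * (C - l * cnj A) + E * (B - l * A)"
      unfolding hH[symmetric] using d by (simp add: field_simps)
    thus ?thesis unfolding kK[symmetric] by (simp add: algebra_simps)
  qed
  define g where "g = (\<lambda>s. (sin s)^2 + cos s * sin s * H - t * (1 + cos s * sin s * K))"
  have cont: "\<forall>x. 0 \<le> x \<and> x \<le> pi/2 \<longrightarrow> isCont g x" unfolding g_def by (auto intro!: continuous_intros)
  have "g 0 \<le> 0" "0 \<le> g (pi/2)" using t unfolding g_def by auto
  then obtain s where gs: "g s = 0" using IVT[of g 0 0 "pi/2"] cont by auto
  define a where "a = complex_of_real (cos s)"
  define b where "b = complex_of_real (sin s) * E"
  have nE: "cmod E = 1" unfolding E_def by simp
  have na: "(cmod a)^2 = (cos s)^2" unfolding a_def by simp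
  have nb: "(cmod b)^2 = (sin s)^2" unfolding b_def by (simp add: norm_mult nE)
  have ab: "a * cnj b = of_real (cos s * sin s) * cnj E" unfolding a_def b_def by simp
  have ba: "b * cnj a = of_real (cos s * sin s) * E" unfolding a_def b_def by simp
  have real_eq: "of_real ((sin s)^2) + of_real (cos s * sin s) * of_real H
      = of_real t * (1 + of_real (cos s * sin s) * of_real K :: complex)"
  proof -
    have "(sin s)^2 + cos s * sin s * H = t * (1 + cos s * sin s * K)" using gs unfolding g_def by simp
    hence "complex_of_real ((sin s)^2 + cos s * sin s * H) = of_real (t * (1 + cos s * sin s * K))" by simp
    thus ?thesis by simp
  qed
  have cs1: "complex_of_real ((cos s)^2) + of_real ((sin s)^2) = 1"
    by (metis of_real_add of_real_1 sin_cos_squared_add2)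
  show ?thesis
  proof (intro exI conjI)
    show "(cmod a)^2 + (cmod b)^2 = 1" unfolding na nb by simp
    have m: "m = l + d" unfolding d_def by simp
    show "of_real ((cmod a)^2) * l + of_real ((cmod b)^2) * m + a * cnj b * C + b * cnj a * B
       = (l + of_real t * (m - l)) * (1 + a * cnj b * cnj A + b * cnj a * A)"
      unfolding na nb ab ba m using comb real_eq cs1 kK by algebra
  qed
qed

lemma lin_D: "linear_operator D T \<Longrightarrow> D \<subseteq> l2" unfolding linear_operator_def by blast
lemma lin_0: "linear_operator D T \<Longrightarrow> (\<lambda>i. 0) \<in> D" unfolding linear_operator_def by blast
lemma lin_T: "linear_operator D T \<Longrightarrow> x \<in> D \<Longrightarrow> T x \<in> l2" unfolding linear_operator_def by blast
lemma lin_scale: "linear_operator D T \<Longrightarrow> x \<in> D \<Longrightarrow> (\<lambda>i. c * x i) \<in> D"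
  unfolding linear_operator_def by blast
lemma lin_comb: assumes "linear_operator D T" "x \<in> D" "y \<in> D" shows "(\<lambda>i. a * x i + b * y i) \<in> D"
proof -
  have ax: "(\<lambda>i. a * x i) \<in> D" and bx: "(\<lambda>i. b * y i) \<in> D" using assms lin_scale by auto
  have add: "\<forall>x\<in>D. \<forall>y\<in>D. (\<lambda>i. x i + y i) \<in> D" using assms(1) unfolding linear_operator_def by blast
  show ?thesis using add[rule_format, OF ax bx] by simp
qed
lemma lin_Tscale: "linear_operator D T \<Longrightarrow> x \<in> D \<Longrightarrow> T (\<lambda>i. c * x i) = (\<lambda>i. c * T x i)"
  unfolding linear_operator_def by blast
lemma lin_Tcomb: assumes "linear_operator D T" "x \<in> D" "y \<in> D"
  shows "T (\<lambda>i. a * x i + b * y i) = (\<lambda>i. a * T x i + b * T y i)"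
proof -
  have ax: "(\<lambda>i. a * x i) \<in> D" and bx: "(\<lambda>i. b * y i) \<in> D" using assms lin_scale by auto
  have add: "\<forall>x\<in>D. \<forall>y\<in>D. T (\<lambda>i. x i + y i) = (\<lambda>i. T x i + T y i)"
    using assms(1) unfolding linear_operator_def by blast
  show ?thesis using add[rule_format, OF ax bx] using lin_Tscale[OF assms(1,2)] lin_Tscale[OF assms(1,3)] by simp
qed

lemma inner_comb: assumes "x \<in> l2" "y \<in> l2" "w \<in> l2"
  shows "l2_inner (\<lambda>i. a * x i + b * y i) w = a * l2_inner x w + b * l2_inner y w"
  using inner_add_left[OF l2_scale[OF assms(1)] l2_scale[OF assms(2)] assms(3)]
    inner_scale_left[OF assms(1,3)] inner_scale_left[OF assms(2,3)] by simp

lemma inner_comb_r: assumes "x \<in> l2" "y \<in> l2" "w \<in> l2"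
  shows "l2_inner w (\<lambda>i. a * x i + b * y i) = cnj a * l2_inner w x + cnj b * l2_inner w y"
  using inner_add_right[OF l2_scale[OF assms(1)] l2_scale[OF assms(2)] assms(3)]
    inner_scale_right[OF assms(1,3)] inner_scale_right[OF assms(2,3)] by simp

lemma norm1_inner: "x \<in> l2 \<Longrightarrow> l2_norm x = 1 \<Longrightarrow> l2_inner x x = 1"
  using inner_self by simp

lemma inner1_norm: assumes "x \<in> l2" "l2_inner x x = 1" shows "l2_norm x = 1"
proof -
  have "(l2_norm x)^2 = 1" using inner_self[OF assms(1)] assms(2) by (metis of_real_eq_1_iff)
  thus ?thesis using l2_norm_nonneg[OF assms(1)] by (simp add: power2_eq_1_iff)
qed

lemma zero_l2: "(\<lambda>i. 0) \<in> l2" by (simp add: l2_iff)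

lemma char_dest:
  assumes "z \<in> ess_num_range D T" "\<epsilon> > 0" "w \<in> l2"
  shows "\<exists>u\<in>D. l2_norm u = 1 \<and> (\<forall>j<N. cmod (u j) < \<epsilon>) \<and> cmod (l2_inner (T u) u - z) < \<epsilon>
            \<and> cmod (l2_inner u w) < \<epsilon>"
proof -
  obtain X where X: "\<And>n. X n \<in> D \<and> l2_norm (X n) = 1" and wX: "weakly_to_zero X"
    and q: "(\<lambda>n. l2_inner (T (X n)) (X n)) \<longlonglongrightarrow> z"
    using assms(1) unfolding ess_num_range_def by blast
  have e1: "eventually (\<lambda>n. \<forall>j\<in>{..<N}. cmod (X n j) < \<epsilon>) sequentially"
  proof (rule eventually_ball_finite)
    show "\<forall>j\<in>{..<N}. eventually (\<lambda>n. cmod (X n j) < \<epsilon>) sequentially"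
      using tendstoD[OF weak_coord[OF wX] assms(2)] by (simp add: dist_norm)
  qed simp
  have e2: "eventually (\<lambda>n. cmod (l2_inner (T (X n)) (X n) - z) < \<epsilon>) sequentially"
    using tendstoD[OF q assms(2)] by (simp add: dist_norm)
  have e3: "eventually (\<lambda>n. cmod (l2_inner (X n) w) < \<epsilon>) sequentially"
    using tendstoD[OF wX[unfolded weakly_to_zero_def, rule_format, OF assms(3)] assms(2)] by (simp add: dist_norm)
  from eventually_conj[OF e1 eventually_conj[OF e2 e3]] obtain n0 where
    "\<And>n. n \<ge> n0 \<Longrightarrow> (\<forall>j\<in>{..<N}. cmod (X n j) < \<epsilon>) \<and> cmod (l2_inner (T (X n)) (X n) - z) < \<epsilon> \<and> cmod (l2_inner (X n) w) < \<epsilon>"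
    by (auto simp: eventually_sequentially)
  hence "(\<forall>j\<in>{..<N}. cmod (X n0 j) < \<epsilon>) \<and> cmod (l2_inner (T (X n0)) (X n0) - z) < \<epsilon> \<and> cmod (l2_inner (X n0) w) < \<epsilon>"
    by blast
  thus ?thesis using X[of n0] by auto
qed

lemma char_intro:
  assumes D: "D \<subseteq> l2"
    and H: "\<And>\<epsilon> N. \<epsilon> > 0 \<Longrightarrow> \<exists>u\<in>D. l2_norm u = 1 \<and> (\<forall>j<N. cmod (u j) < \<epsilon>) \<and> cmod (l2_inner (T u) u - z) < \<epsilon>"
  shows "z \<in> ess_num_range D T"
proof -
  have "\<forall>k. \<exists>u. u \<in> D \<and> l2_norm u = 1 \<and> (\<forall>j<k. cmod (u j) < inverse (real (Suc k))) \<and> cmod (l2_inner (T u) u - z) < inverse (real (Suc k))"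
  proof
    fix k
    show "\<exists>u. u \<in> D \<and> l2_norm u = 1 \<and> (\<forall>j<k. cmod (u j) < inverse (real (Suc k))) \<and> cmod (l2_inner (T u) u - z) < inverse (real (Suc k))"
      using H[of "inverse (real (Suc k))" k] by auto
  qed
  from choice[OF this] obtain U where U0: "\<forall>k. U k \<in> D \<and> l2_norm (U k) = 1 \<and> (\<forall>j<k. cmod (U k j) < inverse (real (Suc k))) \<and> cmod (l2_inner (T (U k)) (U k) - z) < inverse (real (Suc k))"
    by blast
  hence U: "\<And>k. U k \<in> D \<and> l2_norm (U k) = 1 \<and> (\<forall>j<k. cmod (U k j) < inverse (real (Suc k))) \<and> cmod (l2_inner (T (U k)) (U k) - z) < inverse (real (Suc k))"
    by blast
  have coord: "(\<lambda>k. U k j) \<longlonglongrightarrow> 0" for j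
  proof (rule Lim_null_comparison[OF _ LIMSEQ_inverse_real_of_nat])
    show "eventually (\<lambda>k. norm (U k j) \<le> inverse (real (Suc k))) sequentially"
      unfolding eventually_sequentially using U by (intro exI[of _ "Suc j"]) (auto intro: less_imp_le)
  qed
  have wk: "weakly_to_zero U"
    by (rule coord_weak) (use U D coord in auto)
  have "cmod (l2_inner (T (U k)) (U k) - z) \<le> inverse (real (Suc k))" for k
    using U[of k] by (simp only: less_imp_le)
  hence "(\<lambda>k. l2_inner (T (U k)) (U k) - z) \<longlonglongrightarrow> 0"
    by (intro Lim_null_comparison[OF _ LIMSEQ_inverse_real_of_nat] always_eventually) simp
  hence "(\<lambda>k. l2_inner (T (U k)) (U k)) \<longlonglongrightarrow> z" by (simp add: Lim_null[symmetric])
  thus ?thesis unfolding ess_num_range_def using U wk by blast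
qed

lemma closed_W:
  assumes lin: "linear_operator D T"
  shows "closed (ess_num_range D T)"
proof -
  have "closure (ess_num_range D T) \<subseteq> ess_num_range D T"
  proof
    fix z assume z: "z \<in> closure (ess_num_range D T)"
    show "z \<in> ess_num_range D T"
    proof (rule char_intro[OF lin_D[OF lin]])
      fix \<epsilon> :: real and N :: nat assume e: "\<epsilon> > 0"
      obtain z' where z': "z' \<in> ess_num_range D T" "dist z' z < \<epsilon> / 2"
        using z e unfolding closure_approachable by (metis half_gt_zero)
      obtain u where u: "u \<in> D" "l2_norm u = 1" "\<forall>j<N. cmod (u j) < \<epsilon> / 2"
        "cmod (l2_inner (T u) u - z') < \<epsilon> / 2"
        using char_dest[OF z'(1), of "\<epsilon>/2" "\<lambda>i. 0" N] e zero_l2 by auto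
      have "cmod (l2_inner (T u) u - z) \<le> cmod (l2_inner (T u) u - z') + cmod (z' - z)"
        using norm_triangle_ineq[of "l2_inner (T u) u - z'" "z' - z"] by simp
      also have "\<dots> < \<epsilon>" using u(4) z'(2) by (simp add: dist_norm)
      finally show "\<exists>u\<in>D. l2_norm u = 1 \<and> (\<forall>j<N. cmod (u j) < \<epsilon>) \<and> cmod (l2_inner (T u) u - z) < \<epsilon>"
        using u e by (intro bexI[of _ u]) auto
    qed
  qed
  thus ?thesis using closure_subset_eq by blast
qed

lemma spec_sub_W:
  assumes lin: "linear_operator D T"
  shows "ess_spectrum D T \<subseteq> ess_num_range D T"
proof
  fix z assume "z \<in> ess_spectrum D T"
  then obtain X where X: "\<And>n. X n \<in> D \<and> l2_norm (X n) = 1" and wX: "weakly_to_zero X"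
    and lim: "(\<lambda>n. l2_norm (\<lambda>i. T (X n) i - z * X n i)) \<longlonglongrightarrow> 0"
    unfolding ess_spectrum_def by blast
  have Xl: "X n \<in> l2" for n using X lin_D[OF lin] by blast
  have TXl: "T (X n) \<in> l2" for n using X lin_T[OF lin] by blast
  have wl: "(\<lambda>i. T (X n) i - z * X n i) \<in> l2" for n
    using l2_add[OF TXl l2_scale[OF Xl, of "-z"]] by simp
  have eq: "l2_inner (T (X n)) (X n) - z = l2_inner (\<lambda>i. T (X n) i - z * X n i) (X n)" for n
  proof -
    have a1: "l2_inner (\<lambda>i. T (X n) i + (\<lambda>i. (- z) * X n i) i) (X n) = l2_inner (T (X n)) (X n) + l2_inner (\<lambda>i. (- z) * X n i) (X n)"
      by (rule inner_add_left[OF TXl l2_scale[OF Xl] Xl])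
    have a2: "l2_inner (\<lambda>i. (- z) * X n i) (X n) = (-z) * l2_inner (X n) (X n)"
      by (rule inner_scale_left[OF Xl Xl])
    have "(\<lambda>i. T (X n) i + (\<lambda>i. (- z) * X n i) i) = (\<lambda>i. T (X n) i - z * X n i)" by simp
    hence "l2_inner (\<lambda>i. T (X n) i - z * X n i) (X n) = l2_inner (T (X n)) (X n) + (-z) * l2_inner (X n) (X n)"
      using a1 a2 by simp
    thus ?thesis using norm1_inner[OF Xl, of n] X[of n] by simp
  qed
  have bd: "norm (l2_inner (T (X n)) (X n) - z) \<le> l2_norm (\<lambda>i. T (X n) i - z * X n i)" for n
    using cauchy_schwarz[OF wl[of n] Xl[of n]] X[of n] unfolding eq by simp
  have "(\<lambda>n. l2_inner (T (X n)) (X n) - z) \<longlonglongrightarrow> 0"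
    by (rule Lim_null_comparison[OF _ lim]) (use bd in \<open>intro always_eventually allI\<close>)
  hence "(\<lambda>n. l2_inner (T (X n)) (X n)) \<longlonglongrightarrow> z" by (simp add: Lim_null[symmetric])
  thus "z \<in> ess_num_range D T" unfolding ess_num_range_def using X wX by blast
qed

lemma convex_step:
  assumes lin: "linear_operator D T" and lW: "p0 \<in> ess_num_range D T" and mW: "\<mu> \<in> ess_num_range D T"
    and t: "0 \<le> t" "t \<le> 1" and e: "\<epsilon> > 0"
  shows "\<exists>u\<in>D. l2_norm u = 1 \<and> (\<forall>j<N. cmod (u j) < \<epsilon>) \<and>
           cmod (l2_inner (T u) u - ((1 - t) *\<^sub>R p0 + t *\<^sub>R \<mu>)) < \<epsilon>"
proof -
  define \<delta> where "\<delta> = min (\<epsilon>/4) (1/4)"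
  have dp: "\<delta> > 0" using e by (simp add: \<delta>_def)
  have Dl: "D \<subseteq> l2" by (rule lin_D[OF lin])
  obtain x where x: "x \<in> D" "l2_norm x = 1" "\<forall>j<N. cmod (x j) < \<delta>" "cmod (l2_inner (T x) x - p0) < \<delta>"
    using char_dest[OF lW dp zero_l2, of N] by auto
  have xl: "x \<in> l2" using x Dl by blast
  obtain y where y: "y \<in> D" "l2_norm y = 1" "\<forall>j<N. cmod (y j) < \<delta>" "cmod (l2_inner (T y) y - \<mu>) < \<delta>"
      "cmod (l2_inner y x) < \<delta>"
    using char_dest[OF mW dp xl, of N] by auto
  have yl: "y \<in> l2" using y Dl by blast
  have Txl: "T x \<in> l2" and Tyl: "T y \<in> l2" using lin_T[OF lin] x y by auto
  define A where "A = l2_inner y x"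
  define B where "B = l2_inner (T y) x"
  define C where "C = l2_inner (T x) y"
  define l where "l = l2_inner (T x) x"
  define m where "m = l2_inner (T y) y"
  have A4: "cmod A \<le> 1/4" using y(5) unfolding A_def \<delta>_def by simp
  obtain a b where ab: "(cmod a)^2 + (cmod b)^2 = 1" and
    eqn: "of_real ((cmod a)^2) * l + of_real ((cmod b)^2) * m + a * cnj b * C + b * cnj a * B
       = (l + of_real t * (m - l)) * (1 + a * cnj b * cnj A + b * cnj a * A)"
    using key_alg[OF A4 t, of l m C B] by blast
  define P where "P = 1 + a * cnj b * cnj A + b * cnj a * A"
  define z where "z = (\<lambda>i. a * x i + b * y i)"
  have zD: "z \<in> D" unfolding z_def by (rule lin_comb[OF lin x(1) y(1)])
  have zl: "z \<in> l2" using zD Dl by blast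
  have Tz: "T z = (\<lambda>i. a * T x i + b * T y i)" unfolding z_def by (rule lin_Tcomb[OF lin x(1) y(1)])
  have aa: "a * cnj a = of_real ((cmod a)^2)" by (metis complex_norm_square of_real_power)
  have bb: "b * cnj b = of_real ((cmod b)^2)" by (metis complex_norm_square of_real_power)
  have xx: "l2_inner x x = 1" by (rule norm1_inner[OF xl x(2)])
  have yy: "l2_inner y y = 1" by (rule norm1_inner[OF yl y(2)])
  have xy: "l2_inner x y = cnj A" unfolding A_def by (rule inner_cnj[OF yl xl])
  have zz: "l2_inner z z = P"
  proof -
    have "l2_inner z z = a * l2_inner x z + b * l2_inner y z"
      unfolding z_def by (rule inner_comb[OF xl yl zl[unfolded z_def]])
    also have "l2_inner x z = cnj a * l2_inner x x + cnj b * l2_inner x y"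
      unfolding z_def by (rule inner_comb_r[OF xl yl xl])
    also have "l2_inner y z = cnj a * l2_inner y x + cnj b * l2_inner y y"
      unfolding z_def by (rule inner_comb_r[OF xl yl yl])
    finally have "l2_inner z z = a * cnj a + b * cnj b + a * cnj b * cnj A + b * cnj a * A"
      unfolding xx yy xy A_def[symmetric] by (simp add: algebra_simps)
    also have "a * cnj a + b * cnj b = 1" unfolding aa bb
      by (metis ab of_real_1 of_real_add)
    finally show ?thesis unfolding P_def by simp
  qed
  have Tzz: "l2_inner (T z) z = (l + of_real t * (m - l)) * P"
  proof -
    have "l2_inner (T z) z = a * l2_inner (T x) z + b * l2_inner (T y) z"
      unfolding Tz by (rule inner_comb[OF Txl Tyl zl])
    also have "l2_inner (T x) z = cnj a * l + cnj b * C"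
      unfolding z_def l_def C_def by (rule inner_comb_r[OF xl yl Txl])
    also have "l2_inner (T y) z = cnj a * B + cnj b * m"
      unfolding z_def B_def m_def by (rule inner_comb_r[OF xl yl Tyl])
    finally have "l2_inner (T z) z = (a * cnj a) * l + (b * cnj b) * m + a * cnj b * C + b * cnj a * B"
      by (simp add: algebra_simps)
    thus ?thesis unfolding aa bb eqn P_def .
  qed
  define nz where "nz = l2_norm z"
  have nz0: "nz \<ge> 0" unfolding nz_def by (rule l2_norm_nonneg[OF zl])
  have Pnz: "P = of_real (nz^2)" using inner_self[OF zl] zz unfolding nz_def by simp
  have a1: "cmod a \<le> 1" and b1: "cmod b \<le> 1"
  proof -
    have h0: "0 \<le> (cmod a)^2" "0 \<le> (cmod b)^2" by simp_all
    hence "(cmod a)^2 \<le> 1" "(cmod b)^2 \<le> 1" using ab by linarith+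
    thus "cmod a \<le> 1" "cmod b \<le> 1" using abs_square_le_1[of "cmod a"] abs_square_le_1[of "cmod b"] by simp_all
  qed
  have rest: "cmod (a * cnj b * cnj A + b * cnj a * A) \<le> 1/2"
  proof -
    have "cmod (a * cnj b * cnj A + b * cnj a * A) \<le> cmod (a * cnj b * cnj A) + cmod (b * cnj a * A)"
      by (rule norm_triangle_ineq)
    also have "cmod (a * cnj b * cnj A) = cmod a * cmod b * cmod A" by (simp add: norm_mult)
    also have "cmod (b * cnj a * A) = cmod a * cmod b * cmod A" by (simp add: norm_mult)
    also have "cmod a * cmod b * cmod A \<le> 1 * 1 * (1/4)"
      using a1 b1 A4 by (intro mult_mono) auto
    finally show ?thesis by simp
  qed
  have nz2: "nz^2 \<ge> 1/2"
  proof -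
    have "nz^2 = Re P" using Pnz by simp
    also have "Re P = 1 + Re (a * cnj b * cnj A + b * cnj a * A)" unfolding P_def by simp
    finally show ?thesis using abs_Re_le_cmod[of "a * cnj b * cnj A + b * cnj a * A"] rest by linarith
  qed
  have nzh: "nz \<ge> 1/2"
  proof (rule ccontr)
    assume "\<not> nz \<ge> 1/2"
    hence "nz * nz \<le> (1/2) * (1/2)" using nz0 by (intro mult_mono) auto
    thus False using nz2 by (simp add: power2_eq_square)
  qed
  define r where "r = complex_of_real (1 / nz)"
  define u where "u = (\<lambda>i. r * z i)"
  have uD: "u \<in> D" unfolding u_def by (rule lin_scale[OF lin zD])
  have ul: "u \<in> l2" using uD Dl by blast
  have rr: "r * cnj r * P = 1" unfolding r_def Pnz using nzh
    by (simp add: power2_eq_square field_simps flip: of_real_mult)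
  have uu: "l2_inner u u = r * cnj r * P"
  proof -
    have "l2_inner u u = r * l2_inner z u" unfolding u_def by (rule inner_scale_left[OF zl ul[unfolded u_def]])
    also have "l2_inner z u = cnj r * l2_inner z z" unfolding u_def by (rule inner_scale_right[OF zl zl])
    finally show ?thesis using zz by simp
  qed
  have un: "l2_norm u = 1" using inner1_norm[OF ul] uu rr by simp
  have Tu: "T u = (\<lambda>i. r * T z i)" unfolding u_def by (rule lin_Tscale[OF lin zD])
  have Tzl: "T z \<in> l2" using lin_T[OF lin zD] .
  have Tuu: "l2_inner (T u) u = l + of_real t * (m - l)"
  proof -
    have "l2_inner (T u) u = r * l2_inner (T z) u" unfolding Tu by (rule inner_scale_left[OF Tzl ul])
    also have "l2_inner (T z) u = cnj r * l2_inner (T z) z" unfolding u_def by (rule inner_scale_right[OF zl Tzl])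
    finally have "l2_inner (T u) u = (l + of_real t * (m - l)) * (r * cnj r * P)" unfolding Tzz by (simp add: algebra_simps)
    thus ?thesis unfolding rr by simp
  qed
  have coords: "\<forall>j<N. cmod (u j) < \<epsilon>"
  proof (intro allI impI)
    fix j assume j: "j < N"
    have "cmod (u j) = cmod (z j) / nz" unfolding u_def r_def using nz0 by (simp add: norm_divide)
    also have "\<dots> \<le> 2 * cmod (z j)" using nzh nz0 mult_right_mono[of 1 "nz*2" "cmod (z j)"] by (simp add: field_simps)
    also have "cmod (z j) \<le> cmod a * cmod (x j) + cmod b * cmod (y j)"
      unfolding z_def using norm_triangle_ineq[of "a * x j" "b * y j"] by (simp add: norm_mult)
    also have "\<dots> \<le> 1 * cmod (x j) + 1 * cmod (y j)"
      using a1 b1 by (intro add_mono mult_right_mono) auto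
    also have "\<dots> < \<delta> + \<delta>" using x(3)[rule_format, OF j] y(3)[rule_format, OF j] by simp
    finally have "cmod (u j) < 4 * \<delta>" by simp
    thus "cmod (u j) < \<epsilon>" unfolding \<delta>_def by simp
  qed
  have "l + of_real t * (m - l) - ((1 - t) *\<^sub>R p0 + t *\<^sub>R \<mu>) = of_real (1 - t) * (l - p0) + of_real t * (m - \<mu>)"
    by (simp add: scaleR_conv_of_real algebra_simps)
  note eqd = this
  have "cmod (l2_inner (T u) u - ((1 - t) *\<^sub>R p0 + t *\<^sub>R \<mu>)) \<le> (1 - t) * cmod (l - p0) + t * cmod (m - \<mu>)"
  proof -
    have c1: "cmod (1 - complex_of_real t) = 1 - t"
      using t norm_of_real[of "1 - t"] by (simp only: of_real_diff of_real_1) simp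
    show ?thesis
    unfolding Tuu eqd using norm_triangle_ineq[of "of_real (1 - t) * (l - p0)" "of_real t * (m - \<mu>)"] t c1
    by (simp add: norm_mult)
  qed
  also have "\<dots> \<le> (1 - t) * \<delta> + t * \<delta>"
    using x(4) y(4) t unfolding l_def m_def by (intro add_mono mult_left_mono) auto
  also have "\<dots> = \<delta>" by (simp add: algebra_simps)
  also have "\<dots> < \<epsilon>" unfolding \<delta>_def using e by simp
  finally show ?thesis using uD un coords by blast
qed

theorem proposition2p2:
  assumes "linear_operator D T"
  shows "closed (ess_num_range D T) \<and> convex (ess_num_range D T) \<and>
         convex hull (ess_spectrum D T) \<subseteq> ess_num_range D T"
proof -
  have cv: "convex (ess_num_range D T)"
  proof (rule convexI)
    fix p q :: complex and s t :: real
    assume p: "p \<in> ess_num_range D T" and q: "q \<in> ess_num_range D T" and s: "0 \<le> s" and t: "0 \<le> t" and st: "s + t = 1"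
    have s1: "s = 1 - t" using st by simp
    show "s *\<^sub>R p + t *\<^sub>R q \<in> ess_num_range D T" unfolding s1
      by (rule char_intro[OF lin_D[OF assms]]) (rule convex_step[OF assms p q t], use st t s in auto)
  qed
  show ?thesis
    using closed_W[OF assms] cv hull_minimal[of "ess_spectrum D T" "ess_num_range D T" convex, OF spec_sub_W[OF assms] cv] by blast
qed

end
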